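(* Let $n\ge 1$. The number of disjoint preference profiles with $n$ men and $n$ women is at most $(n^2)!$ and is divisible by $(n!)^2$.
   Context: A preference profile for $n$ men and $n$ women consists of, for each man, a strict ranking of the $n$ women (a bijection from the women to $\{1,\dots,n\}$, where $1$ is his favorite), and for each woman, a strict ranking of the $n$ men (a bijection from the men to $\{1,\dots,n\}$). Men and women are labeled, so there are $(n!)^{2n}$ profiles. For a man $M$ and woman $W$, their mutual ranking is the ordered pair $(i,j)$ where $i$ is the rank $M$ gives $W$ and $j$ is the rank $W$ gives $M$. A profile is disjoint if each ordered pair $(i,j)\in\{1,\dots,n\}^2$ occurs as the mutual ranking of exactly one of the $n^2$ man–woman pairs. *)

theory Defs
  imports Main "HOL-Library.FuncSet"
begin

text \<open>A ranking of n objects is a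
bijection from {0..<n} to {1..n} (1 = favourite), taken extensional
(value undefined outside {0..<n}) so that profiles are counted exactly.\<close>

definition rankings :: "nat \<Rightarrow> (nat \<Rightarrow> nat) set" where
  "rankings n = {r \<in> {0..<n} \<rightarrow>\<^sub>E {1..n}. bij_betw r {0..<n} {1..n}}"

text \<open>A profile is a pair (M, W): M i j = rank man i gives woman j,
W j i = rank woman j gives man i.\<close>

definition profiles :: "nat \<Rightarrow> ((nat \<Rightarrow> nat \<Rightarrow> nat) \<times> (nat \<Rightarrow> nat \<Rightarrow> nat)) set" where
  "profiles n = ({0..<n} \<rightarrow>\<^sub>E rankings n) \<times> ({0..<n} \<rightarrow>\<^sub>E rankings n)"

definition mutual_ranking :: "(nat \<Rightarrow> nat \<Rightarrow> nat) \<times> (nat \<Rightarrow> nat \<Rightarrow> nat) \<Rightarrow> nat \<Rightarrow> nat \<Rightarrow> nat \<times> nat" where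
  "mutual_ranking P i j = (fst P i j, snd P j i)"

definition disjoint_profile :: "nat \<Rightarrow> (nat \<Rightarrow> nat \<Rightarrow> nat) \<times> (nat \<Rightarrow> nat \<Rightarrow> nat) \<Rightarrow> bool" where
  "disjoint_profile n P \<longleftrightarrow>
     (\<forall>a\<in>{1..n}. \<forall>b\<in>{1..n}. \<exists>!ij. ij \<in> {0..<n} \<times> {0..<n} \<and> case_prod (mutual_ranking P) ij = (a, b))"

end

theory Submission
  imports Defs "HOL-Combinatorics.Permutations"
begin

type_synonym prof = "(nat \<Rightarrow> nat \<Rightarrow> nat) \<times> (nat \<Rightarrow> nat \<Rightarrow> nat)"

lemma rankingsD:
  assumes "r \<in> rankings n"
  shows "\<And>j. j < n \<Longrightarrow> r j \<in> {1..n}" "\<And>j. \<not> j < n \<Longrightarrow> r j = undefined"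
    "bij_betw r {0..<n} {1..n}"
  using assms unfolding rankings_def by (auto simp: PiE_def extensional_def Pi_def)

lemma profilesD:
  assumes "P \<in> profiles n"
  shows "\<And>i. i < n \<Longrightarrow> fst P i \<in> rankings n" "\<And>i. i < n \<Longrightarrow> snd P i \<in> rankings n"
    "\<And>i. \<not> i < n \<Longrightarrow> fst P i = undefined" "\<And>i. \<not> i < n \<Longrightarrow> snd P i = undefined"
  using assms unfolding profiles_def by (auto simp: PiE_def extensional_def Pi_def)

lemma profile_eq:
  assumes "P \<in> profiles n" "Q \<in> profiles n"
    and "\<And>i j. i < n \<Longrightarrow> j < n \<Longrightarrow> fst P i j = fst Q i j \<and> snd P j i = snd Q j i"
  shows "P = Q"
proof -
  have "fst P = fst Q"
  proof (rule ext)
    fix i show "fst P i = fst Q i"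
    proof (cases "i < n")
      case True
      show ?thesis
      proof (rule ext)
        fix j show "fst P i j = fst Q i j"
          using assms True rankingsD(2)[OF profilesD(1)[OF assms(1) True]]
            rankingsD(2)[OF profilesD(1)[OF assms(2) True]]
          by (cases "j < n") auto
      qed
    qed (use profilesD(3)[OF assms(1)] profilesD(3)[OF assms(2)] in auto)
  qed
  moreover have "snd P = snd Q"
  proof (rule ext)
    fix j show "snd P j = snd Q j"
    proof (cases "j < n")
      case True
      show ?thesis
      proof (rule ext)
        fix i show "snd P j i = snd Q j i"
          using assms True rankingsD(2)[OF profilesD(2)[OF assms(1) True]]
            rankingsD(2)[OF profilesD(2)[OF assms(2) True]]
          by (cases "i < n") auto
      qed
    qed (use profilesD(4)[OF assms(1)] profilesD(4)[OF assms(2)] in auto)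
  qed
  ultimately show ?thesis by (simp add: prod_eq_iff)
qed

lemma prof_vals:
  assumes "P \<in> profiles n" "i < n" "j < n"
  shows "fst P i j \<in> {1..n}" "snd P j i \<in> {1..n}"
  using rankingsD(1)[OF profilesD(1)[OF assms(1,2)] assms(3)]
    rankingsD(1)[OF profilesD(2)[OF assms(1,3)] assms(2)] by auto

lemma disj_uniq:
  assumes "P \<in> profiles n" "disjoint_profile n P"
    "i1 < n" "j1 < n" "i2 < n" "j2 < n"
    "fst P i1 j1 = fst P i2 j2" "snd P j1 i1 = snd P j2 i2"
  shows "i1 = i2 \<and> j1 = j2"
proof -
  let ?v = "(fst P i1 j1, snd P j1 i1)"
  let ?Q = "\<lambda>ij. ij \<in> {0..<n} \<times> {0..<n} \<and> case_prod (mutual_ranking P) ij = ?v"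
  have ex: "\<exists>!ij. ?Q ij"
    using assms(2) prof_vals[OF assms(1,3,4)] unfolding disjoint_profile_def by blast
  have h1: "?Q (i1,j1)" using assms(3,4) by (simp add: mutual_ranking_def)
  have h2: "?Q (i2,j2)" using assms(5-8) by (simp add: mutual_ranking_def)
  have "(i1,j1) = (i2,j2)" using ex h1 h2 by blast
  then show ?thesis by simp
qed

lemma disj_ex:
  assumes "disjoint_profile n P" "a \<in> {1..n}" "b \<in> {1..n}"
  obtains i j where "i < n" "j < n" "fst P i j = a" "snd P j i = b"
proof -
  have "\<exists>ij. ij \<in> {0..<n} \<times> {0..<n} \<and> case_prod (mutual_ranking P) ij = (a, b)"
    using assms unfolding disjoint_profile_def by blast
  then obtain i j where "(i,j) \<in> {0..<n} \<times> {0..<n}" "mutual_ranking P i j = (a, b)"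
    by auto
  then show ?thesis using that unfolding mutual_ranking_def by auto
qed

definition phi :: "nat \<Rightarrow> prof \<Rightarrow> nat \<times> nat \<Rightarrow> nat \<times> nat" where
  "phi n P = (\<lambda>(i,j). if i < n \<and> j < n then (fst P i j - 1, snd P j i - 1) else (i,j))"

lemma phi_permutes:
  assumes "P \<in> profiles n" "disjoint_profile n P"
  shows "phi n P permutes ({0..<n} \<times> {0..<n})"
proof (rule bij_imp_permutes)
  let ?A = "{0..<n} \<times> {0..<n}"
  have inj: "inj_on (phi n P) ?A"
  proof (rule inj_onI)
    fix x y assume "x \<in> ?A" "y \<in> ?A" "phi n P x = phi n P y"
    then obtain i1 j1 i2 j2 where xy: "x = (i1,j1)" "y = (i2,j2)" "i1<n" "j1<n" "i2<n" "j2<n"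
      and e: "fst P i1 j1 - 1 = fst P i2 j2 - 1" "snd P j1 i1 - 1 = snd P j2 i2 - 1"
      unfolding phi_def by auto
    have "fst P i1 j1 = fst P i2 j2" "snd P j1 i1 = snd P j2 i2"
      using e prof_vals[OF assms(1) xy(3,4)] prof_vals[OF assms(1) xy(5,6)] by auto
    then show "x = y" using disj_uniq[OF assms xy(3-6)] xy by auto
  qed
  moreover have "phi n P ` ?A \<subseteq> ?A"
  proof
    fix z assume "z \<in> phi n P ` ?A"
    then obtain i j where "i < n" "j < n" "z = phi n P (i,j)" by auto
    then show "z \<in> ?A" using prof_vals[OF assms(1), of i j] unfolding phi_def by auto
  qed
  ultimately have "phi n P ` ?A = ?A" by (intro endo_inj_surj) auto
  with inj show "bij_betw (phi n P) ?A ?A" by (simp add: bij_betw_def)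
  show "\<And>x. x \<notin> ?A \<Longrightarrow> phi n P x = x" unfolding phi_def by (auto split: if_splits)
qed

lemma phi_inj:
  "inj_on (phi n) {P \<in> profiles n. disjoint_profile n P}"
proof (rule inj_onI)
  fix P Q assume P: "P \<in> {P \<in> profiles n. disjoint_profile n P}"
    and Q: "Q \<in> {P \<in> profiles n. disjoint_profile n P}" and e: "phi n P = phi n Q"
  show "P = Q"
  proof (rule profile_eq[of P n Q])
    fix i j assume ij: "i < n" "j < n"
    have "phi n P (i,j) = phi n Q (i,j)" using e by simp
    then have "fst P i j - 1 = fst Q i j - 1" "snd P j i - 1 = snd Q j i - 1"
      using ij unfolding phi_def by auto
    then show "fst P i j = fst Q i j \<and> snd P j i = snd Q j i"
      using prof_vals[of P n i j] prof_vals[of Q n i j] P Q ij by auto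
  qed (use P Q in auto)
qed

lemma upper:
  "card {P \<in> profiles n. disjoint_profile n P} \<le> fact (n^2)"
proof -
  let ?A = "{0..<n} \<times> {0..<n}"
  have "card {P \<in> profiles n. disjoint_profile n P} \<le> card {p. p permutes ?A}"
    apply (rule card_inj_on_le[OF phi_inj])
    using phi_permutes apply blast
    using finite_permutations[of ?A] by simp
  also have "\<dots> = fact (n^2)"
    by (rule card_permutations) (auto simp: power2_eq_square)
  finally show ?thesis .
qed


definition act :: "nat \<Rightarrow> (nat \<Rightarrow> nat) \<times> (nat \<Rightarrow> nat) \<Rightarrow> prof \<Rightarrow> prof" where
  "act n g P = ((\<lambda>i\<in>{0..<n}. \<lambda>j\<in>{0..<n}. fst P (fst g i) (snd g j)),
                (\<lambda>j\<in>{0..<n}. \<lambda>i\<in>{0..<n}. snd P (snd g j) (fst g i)))"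

definition Perms :: "nat \<Rightarrow> (nat \<Rightarrow> nat) set" where
  "Perms n = {p. p permutes {0..<n}}"

lemma perm_lt: "p \<in> Perms n \<Longrightarrow> i < n \<Longrightarrow> p i < n"
  unfolding Perms_def using permutes_in_image[of p "{0..<n}" i] by auto

lemma act_profiles:
  assumes P: "P \<in> profiles n" and g: "g \<in> Perms n \<times> Perms n"
  shows "act n g P \<in> profiles n"
proof -
  obtain s t where g': "g = (s,t)" "s permutes {0..<n}" "t permutes {0..<n}"
    using g unfolding Perms_def by (cases g) auto
  have "(\<lambda>j\<in>{0..<n}. fst P (s i) (t j)) \<in> rankings n" if i: "i < n" for i
  proof -
    have si: "s i < n" using perm_lt[of s n i] g' i unfolding Perms_def by auto
    have r: "fst P (s i) \<in> rankings n" using profilesD(1)[OF P si] .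
    have b: "bij_betw (fst P (s i) \<circ> t) {0..<n} {1..n}"
      using bij_betw_trans[OF permutes_imp_bij[OF g'(3)] rankingsD(3)[OF r]] .
    have "bij_betw (\<lambda>j\<in>{0..<n}. fst P (s i) (t j)) {0..<n} {1..n}"
      using b by (rule bij_betw_cong[THEN iffD1, rotated]) auto
    moreover have "(\<lambda>j\<in>{0..<n}. fst P (s i) (t j)) \<in> {0..<n} \<rightarrow>\<^sub>E {1..n}"
      unfolding restrict_PiE_iff using rankingsD(1)[OF r] perm_lt[of t n] g'
      unfolding Perms_def by auto
    ultimately show ?thesis unfolding rankings_def by auto
  qed
  moreover have "(\<lambda>i\<in>{0..<n}. snd P (t j) (s i)) \<in> rankings n" if j: "j < n" for j
  proof -
    have tj: "t j < n" using perm_lt[of t n j] g' j unfolding Perms_def by auto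
    have r: "snd P (t j) \<in> rankings n" using profilesD(2)[OF P tj] .
    have b: "bij_betw (snd P (t j) \<circ> s) {0..<n} {1..n}"
      using bij_betw_trans[OF permutes_imp_bij[OF g'(2)] rankingsD(3)[OF r]] .
    have "bij_betw (\<lambda>i\<in>{0..<n}. snd P (t j) (s i)) {0..<n} {1..n}"
      using b by (rule bij_betw_cong[THEN iffD1, rotated]) auto
    moreover have "(\<lambda>i\<in>{0..<n}. snd P (t j) (s i)) \<in> {0..<n} \<rightarrow>\<^sub>E {1..n}"
      unfolding restrict_PiE_iff using rankingsD(1)[OF r] perm_lt[of s n] g'
      unfolding Perms_def by auto
    ultimately show ?thesis unfolding rankings_def by auto
  qed
  ultimately show ?thesis unfolding profiles_def act_def g'(1)
    by (auto simp: restrict_PiE_iff)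
qed

lemma act_vals:
  "i < n \<Longrightarrow> j < n \<Longrightarrow> fst (act n g P) i j = fst P (fst g i) (snd g j)"
  "i < n \<Longrightarrow> j < n \<Longrightarrow> snd (act n g P) j i = snd P (snd g j) (fst g i)"
  unfolding act_def by auto

lemma act_disj:
  assumes P: "P \<in> profiles n" "disjoint_profile n P" and g: "g \<in> Perms n \<times> Perms n"
  shows "disjoint_profile n (act n g P)"
proof -
  obtain s t where g': "g = (s,t)" "s permutes {0..<n}" "t permutes {0..<n}"
    using g unfolding Perms_def by (cases g) auto
  have sl: "\<And>i. i < n \<Longrightarrow> s i < n" and tl: "\<And>i. i < n \<Longrightarrow> t i < n"
    using perm_lt g' unfolding Perms_def by auto
  have sil: "\<And>i. i < n \<Longrightarrow> inv s i < n" and til: "\<And>i. i < n \<Longrightarrow> inv t i < n"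
    using perm_lt permutes_inv g' unfolding Perms_def by blast+
  show ?thesis unfolding disjoint_profile_def
  proof (intro ballI)
    fix a b assume ab: "a \<in> {1..n}" "b \<in> {1..n}"
    obtain i j where ij: "i < n" "j < n" "fst P i j = a" "snd P j i = b"
      using disj_ex[OF P(2) ab] .
    show "\<exists>!ij. ij \<in> {0..<n} \<times> {0..<n} \<and> case_prod (mutual_ranking (act n g P)) ij = (a, b)"
    proof (rule ex1I[of _ "(inv s i, inv t j)"])
      show "(inv s i, inv t j) \<in> {0..<n} \<times> {0..<n} \<and>
        case_prod (mutual_ranking (act n g P)) (inv s i, inv t j) = (a, b)"
        using ij sil til act_vals[of "inv s i" n "inv t j" g P]
          permutes_inverses(1)[OF g'(2)] permutes_inverses(1)[OF g'(3)]
        unfolding mutual_ranking_def g'(1) by auto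
    next
      fix y assume y: "y \<in> {0..<n} \<times> {0..<n} \<and> case_prod (mutual_ranking (act n g P)) y = (a, b)"
      obtain i' j' where y': "y = (i', j')" "i' < n" "j' < n" using y by auto
      have "fst P (s i') (t j') = a" "snd P (t j') (s i') = b"
        using y y' act_vals[of i' n j' g P] unfolding mutual_ranking_def g'(1) by auto
      then have "s i' = i \<and> t j' = j"
        using disj_uniq[OF P sl[OF y'(2)] tl[OF y'(3)] ij(1,2)] ij by auto
      then show "y = (inv s i, inv t j)"
        using y' permutes_inverses(2)[OF g'(2)] permutes_inverses(2)[OF g'(3)] by auto
    qed
  qed
qed

lemma act_comp:
  assumes h: "h \<in> Perms n \<times> Perms n"
  shows "act n h (act n g P) = act n (fst g \<circ> fst h, snd g \<circ> snd h) P"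
proof -
  have sl: "\<And>i. i < n \<Longrightarrow> fst h i < n" and tl: "\<And>i. i < n \<Longrightarrow> snd h i < n"
    using perm_lt h by auto
  have "fst (act n h (act n g P)) = fst (act n (fst g \<circ> fst h, snd g \<circ> snd h) P)"
    unfolding act_def[of n h] act_def[of n "(fst g \<circ> fst h, snd g \<circ> snd h)"] fst_conv
    by (intro restrict_ext) (simp add: act_vals sl tl)
  moreover have "snd (act n h (act n g P)) = snd (act n (fst g \<circ> fst h, snd g \<circ> snd h) P)"
    unfolding act_def[of n h] act_def[of n "(fst g \<circ> fst h, snd g \<circ> snd h)"] snd_conv
    by (intro restrict_ext) (simp add: act_vals sl tl)
  ultimately show ?thesis by (simp add: prod_eq_iff)
qed

lemma act_id:
  assumes "P \<in> profiles n"
  shows "act n (id, id) P = P"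
  by (rule profile_eq[OF act_profiles[OF assms] assms]) (auto simp: Perms_def act_vals)

lemma act_inj:
  assumes P: "P \<in> profiles n" "disjoint_profile n P" and n: "n \<ge> 1"
  shows "inj_on (\<lambda>g. act n g P) (Perms n \<times> Perms n)"
proof (rule inj_onI)
  fix g h assume g: "g \<in> Perms n \<times> Perms n" and h: "h \<in> Perms n \<times> Perms n"
    and e: "act n g P = act n h P"
  have key: "fst g i = fst h i \<and> snd g j = snd h j" if ij: "i < n" "j < n" for i j
  proof -
    have e1: "fst P (fst g i) (snd g j) = fst P (fst h i) (snd h j)"
      using act_vals(1)[OF ij, of g P] act_vals(1)[OF ij, of h P] e by simp
    have e2: "snd P (snd g j) (fst g i) = snd P (snd h j) (fst h i)"
      using act_vals(2)[OF ij, of g P] act_vals(2)[OF ij, of h P] e by simp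
    have l: "fst g i < n" "snd g j < n" "fst h i < n" "snd h j < n"
      using perm_lt g h ij by auto
    show ?thesis using disj_uniq[OF P l e1 e2] .
  qed
  have "fst g = fst h"
  proof
    fix i show "fst g i = fst h i"
    proof (cases "i < n")
      case True then show ?thesis using key[of i 0] n by auto
    next
      case False then show ?thesis using g h unfolding Perms_def permutes_def
        by (auto simp: mem_Times_iff)
    qed
  qed
  moreover have "snd g = snd h"
  proof
    fix i show "snd g i = snd h i"
    proof (cases "i < n")
      case True then show ?thesis using key[of 0 i] n by auto
    next
      case False then show ?thesis using g h unfolding Perms_def permutes_def
        by (auto simp: mem_Times_iff)
    qed
  qed
  ultimately show "g = h" by (simp add: prod_eq_iff)
qed

definition orb :: "nat \<Rightarrow> prof \<Rightarrow> prof set" where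
  "orb n P = (\<lambda>g. act n g P) ` (Perms n \<times> Perms n)"

lemma comp_in: "g \<in> Perms n \<times> Perms n \<Longrightarrow> h \<in> Perms n \<times> Perms n \<Longrightarrow>
  (fst g \<circ> fst h, snd g \<circ> snd h) \<in> Perms n \<times> Perms n"
  unfolding Perms_def by (auto intro: permutes_compose)

lemma orb_eq:
  assumes P: "P \<in> profiles n" and x: "x \<in> orb n P"
  shows "orb n x = orb n P"
proof -
  obtain s t where g: "(s,t) \<in> Perms n \<times> Perms n" and xe: "x = act n (s,t) P"
    using x unfolding orb_def by auto
  have gi: "(inv s, inv t) \<in> Perms n \<times> Perms n"
    using g unfolding Perms_def by (auto intro: permutes_inv)
  have hback: "act n (inv s, inv t) x = P"
    using act_comp[OF gi, of "(s,t)" P] permutes_inv_o(1)[of s "{0..<n}"]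
      permutes_inv_o(1)[of t "{0..<n}"] g act_id[OF P] xe unfolding Perms_def by auto
  show ?thesis
  proof
    show "orb n x \<subseteq> orb n P"
    proof
      fix y assume "y \<in> orb n x"
      then obtain k where k: "k \<in> Perms n \<times> Perms n" "y = act n k x" unfolding orb_def by auto
      then have "y = act n (s \<circ> fst k, t \<circ> snd k) P" using act_comp[OF k(1)] xe by auto
      moreover have "(s \<circ> fst k, t \<circ> snd k) \<in> Perms n \<times> Perms n"
        using comp_in[OF g k(1)] by simp
      ultimately show "y \<in> orb n P" unfolding orb_def by blast
    qed
  next
    show "orb n P \<subseteq> orb n x"
    proof
      fix y assume "y \<in> orb n P"
      then obtain k where k: "k \<in> Perms n \<times> Perms n" "y = act n k P" unfolding orb_def by auto
      then have "y = act n (inv s \<circ> fst k, inv t \<circ> snd k) x"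
        using act_comp[OF k(1), of "(inv s, inv t)" x] hback by auto
      moreover have "(inv s \<circ> fst k, inv t \<circ> snd k) \<in> Perms n \<times> Perms n"
        using comp_in[OF gi k(1)] by simp
      ultimately show "y \<in> orb n x" unfolding orb_def by blast
    qed
  qed
qed

lemma finite_profiles: "finite (profiles n)"
proof -
  have "rankings n \<subseteq> {0..<n} \<rightarrow>\<^sub>E {1..n}" unfolding rankings_def by auto
  then have "finite (rankings n)" using finite_PiE[of "{0..<n}" "\<lambda>_. {1..n}"]
    by (auto intro: finite_subset)
  then show ?thesis unfolding profiles_def by (auto intro: finite_PiE)
qed

lemma divis:
  assumes n: "n \<ge> 1"
  shows "(fact n)^2 dvd card {P \<in> profiles n. disjoint_profile n P}"
proof -
  let ?D = "{P \<in> profiles n. disjoint_profile n P}"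
  let ?G = "Perms n \<times> Perms n"
  let ?C = "orb n ` ?D"
  have fD: "finite ?D" using finite_profiles by auto
  have cG: "card ?G = fact n * fact n"
    unfolding Perms_def card_cartesian_product
    using card_permutations[of "{0..<n}" n] by simp
  have U: "\<Union>?C = ?D"
  proof
    show "\<Union>?C \<subseteq> ?D" unfolding orb_def
      using act_profiles act_disj by fastforce
    show "?D \<subseteq> \<Union>?C"
    proof
      fix P assume P: "P \<in> ?D"
      have "(id, id) \<in> ?G" unfolding Perms_def by auto
      then have "act n (id,id) P \<in> orb n P" unfolding orb_def by blast
      then have "P \<in> orb n P" using act_id P by simp
      then show "P \<in> \<Union>?C" using P by blast
    qed
  qed
  have "card ?G * card ?C = card (\<Union>?C)"
  proof (rule card_partition)
    show "finite ?C" using fD by auto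
    show "finite (\<Union>?C)" using U fD by simp
    show "\<And>c. c \<in> ?C \<Longrightarrow> card c = card ?G"
      unfolding orb_def using act_inj n by (auto intro: card_image)
    show "\<And>c1 c2. c1 \<in> ?C \<Longrightarrow> c2 \<in> ?C \<Longrightarrow> c1 \<noteq> c2 \<Longrightarrow> c1 \<inter> c2 = {}"
    proof -
      fix c1 c2 assume "c1 \<in> ?C" "c2 \<in> ?C" "c1 \<noteq> c2"
      then obtain P Q where PQ: "P \<in> ?D" "Q \<in> ?D" "c1 = orb n P" "c2 = orb n Q" "c1 \<noteq> c2"
        by blast
      show "c1 \<inter> c2 = {}"
      proof (rule ccontr)
        assume "c1 \<inter> c2 \<noteq> {}"
        then obtain x where "x \<in> orb n P" "x \<in> orb n Q" using PQ by blast
        then have "orb n x = orb n P" "orb n x = orb n Q" using orb_eq PQ by blast+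
        then show False using PQ by simp
      qed
    qed
  qed
  then have "card ?D = (fact n * fact n) * card ?C" using U cG by simp
  then show ?thesis by (simp add: power2_eq_square)
qed

theorem mainTheorem1:
  fixes n :: nat
  assumes "n \<ge> 1"
  shows "card {P \<in> profiles n. disjoint_profile n P} \<le> fact (n^2)
       \<and> (fact n)^2 dvd card {P \<in> profiles n. disjoint_profile n P}"
  using upper divis assms by blast

end
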